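(* Fix $\sigma^2>0$. For $\delta>0$ let $\rho_0=\frac{\delta}{1+\sigma^2}$ and define $\phi^{-1}_\delta:[0,\infty)\to\mathbb R$ by $\phi^{-1}_\delta(\rho)=1$ for $0\le\rho<\rho_0$ and $\phi^{-1}_\delta(\rho)=\frac{\delta}{\rho}-\sigma^2$ for $\rho\ge\rho_0$. Let $$\mathrm{mmse}(\mathcal B,\rho)=1-\int_{-\infty}^{\infty}\frac{e^{-x^2/2}}{\sqrt{2\pi}}\tanh\!\left(\rho-\sqrt{\rho}\,x\right)\mathrm{d}x,$$ let $\psi^{opt}_{\mathcal B}(\rho)=\min\{\phi^{-1}_\delta(\rho),\mathrm{mmse}(\mathcal B,\rho)\}$, and $$a_{\mathcal B}(\delta)=\int_0^\infty\big(\phi^{-1}_\delta(\rho)-\psi^{opt}_{\mathcal B}(\rho)\big)\,\mathrm d\rho .$$ Define $R_{\mathrm{AC}}(\delta)=C_{\mathrm G}-\frac{a_{\mathcal B}(\delta)}{2\delta}$ with $C_{\mathrm G}=\frac12\ln(1+1/\sigma^2)$. Then $a_{\mathcal B}(\delta)/(2\delta)\to0$, i.e. $R_{\mathrm{AC}}(\delta)\to C_{\mathrm G}$, as $\delta\to0$.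
   Context: $\mathrm{mmse}(\mathcal B,\rho)$ is the minimum mean-squared error of estimating a uniformly distributed $s\in\{+1,-1\}$ from $\sqrt\rho\,s+w$ with $w\sim\mathcal N(0,1)$ independent of $s$. $\phi^{-1}_\delta$ is the (extended) inverse of $\phi(v)=\delta/(v+\sigma^2)$, $v\in[0,1]$. In the paper's interpretation, $R_{\mathrm{AC}}$ is the rate of a compressed coding scheme with BPSK whose decoder transfer curve meets the matching condition $\psi=\psi^{opt}_{\mathcal B}$, and $\delta\to0$ is taken together with the underlying code rate $R_{\mathrm C}=\delta R_{\mathrm{AC}}\to0$. *)

theory Defs
  imports "HOL-Analysis.Analysis"
begin

definition phi_inv :: "real \<Rightarrow> real \<Rightarrow> real \<Rightarrow> real" where
  "phi_inv sigma2 \<delta> \<rho> =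
     (if \<rho> < \<delta> / (1 + sigma2) then 1 else \<delta> / \<rho> - sigma2)"

definition mmse_B :: "real \<Rightarrow> real" where
  "mmse_B \<rho> = 1 - (\<integral>x. exp (- (x\<^sup>2) / 2) / sqrt (2 * pi) * tanh (\<rho> - sqrt \<rho> * x) \<partial>lborel)"

definition psi_opt_B :: "real \<Rightarrow> real \<Rightarrow> real \<Rightarrow> real" where
  "psi_opt_B sigma2 \<delta> \<rho> = min (phi_inv sigma2 \<delta> \<rho>) (mmse_B \<rho>)"

definition a_B :: "real \<Rightarrow> real \<Rightarrow> real" where
  "a_B sigma2 \<delta> = (LINT \<rho>:{0..}|lborel. phi_inv sigma2 \<delta> \<rho> - psi_opt_B sigma2 \<delta> \<rho>)"

definition C_G :: "real \<Rightarrow> real" where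
  "C_G sigma2 = ln (1 + 1 / sigma2) / 2"

definition R_AC :: "real \<Rightarrow> real \<Rightarrow> real" where
  "R_AC sigma2 \<delta> = C_G sigma2 - a_B sigma2 \<delta> / (2 * \<delta>)"

end

theory Submission
  imports Defs "HOL-Probability.Probability"
begin

lemma tanh_abs_le: "\<bar>tanh (y::real)\<bar> \<le> 2 * \<bar>y\<bar>"
proof -
  have main: "tanh z \<le> 2 * z" if "z \<ge> 0" for z :: real
  proof -
    have e: "exp (-2*z) \<ge> 1 - 2*z" using exp_ge_add_one_self[of "-2*z"] by simp
    have p: "exp (-2*z) > 0" by simp
    have "tanh z = (1 - exp (- 2 * z)) / (1 + exp (- 2 * z))" by (rule tanh_real_altdef)
    also have "\<dots> \<le> 1 - exp (-2*z)"
    proof -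
      have "1 - exp (-2*z) \<ge> 0" using that by simp
      then have "(1 - exp (-2*z)) / (1 + exp (-2*z)) \<le> (1 - exp (-2*z)) / 1"
        by (intro divide_left_mono) (auto intro!: add_pos_pos)
      then show ?thesis by simp
    qed
    finally show ?thesis using e by simp
  qed
  have "tanh \<bar>y\<bar> \<le> 2 * \<bar>y\<bar>" by (rule main) simp
  then show ?thesis by simp
qed

lemma absb: "\<bar>a::real\<bar> \<le> b \<Longrightarrow> a \<le> b \<and> -a \<le> b \<and> 0 \<le> b" by linarith

definition cG :: real where "cG = (\<integral>x. std_normal_density x * \<bar>x\<bar>^1 \<partial>lborel)"

lemma G_eq: "exp (- (x\<^sup>2) / 2) / sqrt (2 * pi) = std_normal_density x"
  by (simp add: std_normal_density_def)

lemma I_bound: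
  assumes r: "\<rho> \<ge> 0"
  shows "\<bar>1 - mmse_B \<rho>\<bar> \<le> 2*\<rho> + 2 * sqrt \<rho> * cG \<and> \<bar>1 - mmse_B \<rho>\<bar> \<le> 1"
proof -
  define f where "f x = std_normal_density x * tanh (\<rho> - sqrt \<rho> * x)" for x
  have eq: "1 - mmse_B \<rho> = (\<integral>x. f x \<partial>lborel)"
    unfolding mmse_B_def f_def G_eq by simp
  have int0: "integrable lborel (\<lambda>x. std_normal_density x * \<bar>x\<bar>^0)"
    by (rule integrable_std_normal_moment_abs)
  have int1: "integrable lborel (\<lambda>x. std_normal_density x * \<bar>x\<bar>^1)"
    by (rule integrable_std_normal_moment_abs)
  have I0: "(\<integral>x. std_normal_density x * \<bar>x\<bar>^0 \<partial>lborel) = 1"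
    using integral_std_normal_moment_even[of 0] by simp
  define g where "g x = 2*\<rho> * (std_normal_density x * \<bar>x\<bar>^0) + 2 * sqrt \<rho> * (std_normal_density x * \<bar>x\<bar>^1)" for x
  have gint: "integrable lborel g" unfolding g_def using int0 int1 by auto
  have gI: "(\<integral>x. g x \<partial>lborel) = 2*\<rho> + 2 * sqrt \<rho> * cG"
    unfolding g_def cG_def using int0 int1 I0 by simp
  have fb: "\<bar>f x\<bar> \<le> g x" for x
  proof -
    have d: "std_normal_density x \<ge> 0" by (simp add: std_normal_density_def)
    have "\<bar>tanh (\<rho> - sqrt \<rho> * x)\<bar> \<le> 2*\<bar>\<rho> - sqrt \<rho> * x\<bar>" by (rule tanh_abs_le)
    also have "\<dots> \<le> 2*\<rho> + 2 * sqrt \<rho> * \<bar>x\<bar>"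
    proof -
      have "\<bar>\<rho> - sqrt \<rho> * x\<bar> \<le> \<bar>\<rho>\<bar> + \<bar>sqrt \<rho> * x\<bar>" by (rule abs_triangle_ineq4)
      then show ?thesis using r by (simp add: abs_mult)
    qed
    finally have "\<bar>f x\<bar> \<le> std_normal_density x * (2*\<rho> + 2 * sqrt \<rho> * \<bar>x\<bar>)"
      unfolding f_def abs_mult using d by (simp add: mult_left_mono)
    then show ?thesis unfolding g_def by (simp add: algebra_simps)
  qed
  have a1: "(\<integral>x. f x \<partial>lborel) \<le> (\<integral>x. g x \<partial>lborel)"
    by (rule integral_mono'[OF gint]) (use absb[OF fb] in auto)
  have a2: "(\<integral>x. - f x \<partial>lborel) \<le> (\<integral>x. g x \<partial>lborel)"
    by (rule integral_mono'[OF gint]) (use absb[OF fb] in auto)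
  define h where "h x = std_normal_density x * \<bar>x\<bar>^0" for x
  have hb: "\<bar>f x\<bar> \<le> h x" for x
  proof -
    have d: "std_normal_density x \<ge> 0" by (simp add: std_normal_density_def)
    have "\<bar>tanh (\<rho> - sqrt \<rho> * x)\<bar> \<le> 1" using tanh_real_bounds[of "\<rho> - sqrt \<rho> * x"] by auto
    then show ?thesis unfolding f_def h_def abs_mult using d by (simp add: mult_left_le)
  qed
  have b1: "(\<integral>x. f x \<partial>lborel) \<le> (\<integral>x. h x \<partial>lborel)"
    by (rule integral_mono'[OF int0[folded h_def]]) (use absb[OF hb] in auto)
  have b2: "(\<integral>x. - f x \<partial>lborel) \<le> (\<integral>x. h x \<partial>lborel)"
    by (rule integral_mono'[OF int0[folded h_def]]) (use absb[OF hb] in auto)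
  show ?thesis using a1 a2 b1 b2 gI I0 unfolding eq h_def by (simp add: abs_le_iff)
qed


lemma cG_nonneg: "cG \<ge> 0"
  unfolding cG_def by (rule integral_nonneg_AE) (auto simp: std_normal_density_def)

lemma a_B_bound:
  assumes s: "sigma2 > 0" and d: "\<delta> > 0"
  shows "0 \<le> a_B sigma2 \<delta> \<and> a_B sigma2 \<delta> \<le> (\<delta>/sigma2) * (2*(\<delta>/sigma2) + 2 * sqrt (\<delta>/sigma2) * cG)"
proof -
  define K where "K = \<delta>/sigma2"
  define M where "M = 2*K + 2 * sqrt K * cG"
  have K0: "K > 0" unfolding K_def using s d by simp
  have M0: "M \<ge> 0" unfolding M_def using K0 cG_nonneg by simp
  define F where "F \<rho> = phi_inv sigma2 \<delta> \<rho> - psi_opt_B sigma2 \<delta> \<rho>" for \<rho>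
  have Fnn: "F \<rho> \<ge> 0" for \<rho> unfolding F_def psi_opt_B_def by simp
  have Fb: "F \<rho> \<le> indicator {0..K} \<rho> * M" if r: "\<rho> \<ge> 0" for \<rho>
  proof -
    have IB: "\<bar>1 - mmse_B \<rho>\<bar> \<le> 2*\<rho> + 2 * sqrt \<rho> * cG \<and> \<bar>1 - mmse_B \<rho>\<bar> \<le> 1"
      by (rule I_bound[OF r])
    have r0: "\<delta> / (1 + sigma2) < K" unfolding K_def using s d by (simp add: frac_less2)
    show ?thesis
    proof (cases "\<rho> \<le> K")
      case True
      have phi1: "phi_inv sigma2 \<delta> \<rho> \<le> 1"
      proof (cases "\<rho> < \<delta> / (1 + sigma2)")
        case False
        then have rp: "\<rho> > 0" using s d divide_pos_pos[of \<delta> "1+sigma2"] by linarith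
        from False have "\<delta> / (1 + sigma2) \<le> \<rho>" by simp
        then have "\<delta> \<le> \<rho> * (1 + sigma2)" using s by (simp add: divide_le_eq)
        then have "\<delta> / \<rho> \<le> 1 + sigma2" using rp by (simp add: divide_le_eq mult.commute)
        then show ?thesis using False unfolding phi_inv_def by simp
      qed (simp add: phi_inv_def)
      have "F \<rho> \<le> \<bar>1 - mmse_B \<rho>\<bar>" unfolding F_def psi_opt_B_def using phi1 by (simp add: min_def)
      also have "\<dots> \<le> 2*\<rho> + 2 * sqrt \<rho> * cG" using IB by simp
      also have "\<dots> \<le> M" unfolding M_def using True r cG_nonneg
        by (intro add_mono mult_right_mono) (auto intro: real_sqrt_le_mono)
      finally show ?thesis using True r by simp
    next
      case False
      then have rp: "\<rho> > K" by simp
      have rpos: "\<rho> > 0" using rp K0 by linarith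
      have "\<delta> < \<rho> * sigma2" using rp s unfolding K_def by (simp add: divide_less_eq)
      then have "\<delta> / \<rho> < sigma2" using rpos by (simp add: divide_less_eq mult.commute)
      then have "phi_inv sigma2 \<delta> \<rho> < 0" using rp r0 unfolding phi_inv_def by simp
      moreover have "mmse_B \<rho> \<ge> 0" using IB by (auto simp: abs_le_iff)
      ultimately have "F \<rho> = 0" unfolding F_def psi_opt_B_def by (simp add: min_def)
      then show ?thesis using rp by simp
    qed
  qed
  have aeq: "a_B sigma2 \<delta> = (\<integral>\<rho>. indicator {0..} \<rho> * F \<rho> \<partial>lborel)"
    unfolding a_B_def set_lebesgue_integral_def F_def by simp
  have gint: "integrable lborel (\<lambda>\<rho>. indicator {0..K} \<rho> * M :: real)"
    by (intro integrable_mult_left integrable_real_indicator) (auto simp: emeasure_lborel_Icc_eq)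
  have gI: "(\<integral>\<rho>. indicator {0..K} \<rho> * M \<partial>lborel) = K * M"
    using K0 by simp
  have pb: "indicator {0..} \<rho> * F \<rho> \<le> indicator {0..K} \<rho> * M" for \<rho>
    using Fb[of \<rho>] M0 by (cases "\<rho> \<ge> 0") auto
  have up: "a_B sigma2 \<delta> \<le> K * M"
    unfolding aeq gI[symmetric]
    by (rule integral_mono'[OF gint]) (use pb M0 in \<open>auto simp: indicator_def\<close>)
  have lo: "0 \<le> a_B sigma2 \<delta>"
    unfolding aeq by (rule integral_nonneg_AE) (auto simp: Fnn indicator_def)
  show ?thesis using up lo unfolding K_def M_def by simp
qed

theorem theorem1:
  fixes sigma2 :: real
  assumes "sigma2 > 0"
  shows "((\<lambda>\<delta>. a_B sigma2 \<delta> / (2 * \<delta>)) \<longlongrightarrow> 0) (at_right 0) \<and>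
         ((\<lambda>\<delta>. R_AC sigma2 \<delta>) \<longlongrightarrow> C_G sigma2) (at_right 0)"
proof -
  define g where "g \<delta> = (2*(\<delta>/sigma2) + 2 * sqrt (\<delta>/sigma2) * cG) / (2 * sigma2)" for \<delta>
  have gc: "isCont g 0" unfolding g_def by (intro continuous_intros) (use assms in auto)
  have "(g \<longlongrightarrow> g 0) (at 0)" using gc by (simp add: isCont_def)
  then have gt: "(g \<longlongrightarrow> 0) (at_right 0)" unfolding g_def
    by (auto intro: tendsto_mono at_within_le_at)
  have ev: "\<forall>\<^sub>F \<delta> in at_right 0. (0::real) < \<delta>" by (rule eventually_at_right_less)
  have t1: "((\<lambda>\<delta>. a_B sigma2 \<delta> / (2 * \<delta>)) \<longlongrightarrow> 0) (at_right 0)"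
  proof (rule tendsto_sandwich[OF _ _ tendsto_const gt])
    show "\<forall>\<^sub>F \<delta> in at_right 0. 0 \<le> a_B sigma2 \<delta> / (2 * \<delta>)"
      using ev by eventually_elim (use a_B_bound[OF assms] in auto)
    show "\<forall>\<^sub>F \<delta> in at_right 0. a_B sigma2 \<delta> / (2 * \<delta>) \<le> g \<delta>"
      using ev
    proof eventually_elim
      case (elim \<delta>)
      have b: "a_B sigma2 \<delta> \<le> (\<delta>/sigma2) * (2*(\<delta>/sigma2) + 2 * sqrt (\<delta>/sigma2) * cG)"
        using a_B_bound[OF assms elim] by simp
      have "a_B sigma2 \<delta> / (2 * \<delta>) \<le> (\<delta>/sigma2) * (2*(\<delta>/sigma2) + 2 * sqrt (\<delta>/sigma2) * cG) / (2*\<delta>)"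
        by (rule divide_right_mono[OF b]) (use elim in simp)
      also have "\<dots> = g \<delta>" unfolding g_def using elim assms by (simp add: field_simps)
      finally show ?case .
    qed
  qed
  have t2: "((\<lambda>\<delta>. R_AC sigma2 \<delta>) \<longlongrightarrow> C_G sigma2) (at_right 0)"
    unfolding R_AC_def using tendsto_diff[OF tendsto_const t1, of "C_G sigma2"] by simp
  show ?thesis using t1 t2 by simp
qed

end
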